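(* Let $X \in \Lambda^2_{14} = \mathfrak{g}_2$ with $\operatorname{rank} X \leq 4$. Then $\ker X$ contains an associative $3$-plane.
   Context: Equip $\mathbb{R}^7$ with its standard inner product and basis. Let $\varphi = e_{123} - e_{167} - e_{527} - e_{563} - e_{415} - e_{426} - e_{437}$ ($e_{ijk} = e_i\wedge e_j \wedge e_k$) and define the cross product by $\langle u\times v, w\rangle = \varphi(u,v,w)$. A skew bilinear form $X$ is identified with the skew-adjoint operator $X$ given by $X(u,v) = \langle X(u),v\rangle$ (rank and kernel refer to this operator). $\Lambda^2_{14} = \mathfrak{g}_2$ is the set of skew bilinear forms $X$ with $X(v\times w) = X(v)\times w + v \times X(w)$ for all $v,w$. A $3$-dimensional subspace is associative if it is closed under $\times$. *)

theory Defs
  imports "HOL-Analysis.Analysis"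
begin

(* Basis indices 1..7 of R^7 are the elements of type 7 given by of_nat 1, ..., of_nat 7
   (of_nat 7 = 0 in the type 7; the map {1..7} -> 7 is a bijection). *)
definition idx :: "nat \<Rightarrow> 7" where "idx i = of_nat i"

(* e_{ijk} = e_i \<wedge> e_j \<wedge> e_k evaluated on (u,v,w): the 3x3 determinant *)
definition wedge3 :: "nat \<Rightarrow> nat \<Rightarrow> nat \<Rightarrow> real^7 \<Rightarrow> real^7 \<Rightarrow> real^7 \<Rightarrow> real" where
  "wedge3 i j k u v w =
     u$idx i * (v$idx j * w$idx k - v$idx k * w$idx j)
   - u$idx j * (v$idx i * w$idx k - v$idx k * w$idx i)
   + u$idx k * (v$idx i * w$idx j - v$idx j * w$idx i)"

definition phi :: "real^7 \<Rightarrow> real^7 \<Rightarrow> real^7 \<Rightarrow> real" where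
  "phi u v w = wedge3 1 2 3 u v w - wedge3 1 6 7 u v w - wedge3 5 2 7 u v w
     - wedge3 5 6 3 u v w - wedge3 4 1 5 u v w - wedge3 4 2 6 u v w - wedge3 4 3 7 u v w"

(* cross product: <u x v, w> = phi(u,v,w) *)
definition cross7 :: "real^7 \<Rightarrow> real^7 \<Rightarrow> real^7" where
  "cross7 u v = (\<chi> k. phi u v (axis k 1))"

(* A skew bilinear form X, identified with the skew-adjoint operator given by a matrix *)
definition skew :: "real^7^7 \<Rightarrow> bool" where
  "skew A \<longleftrightarrow> transpose A = - A"

definition in_g2 :: "real^7^7 \<Rightarrow> bool" where
  "in_g2 A \<longleftrightarrow> skew A \<and>
     (\<forall>v w. A *v cross7 v w = cross7 (A *v v) w + cross7 v (A *v w))"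

definition associative3 :: "(real^7) set \<Rightarrow> bool" where
  "associative3 V \<longleftrightarrow> subspace V \<and> dim V = 3 \<and> (\<forall>u\<in>V. \<forall>v\<in>V. cross7 u v \<in> V)"

end

theory Submission
  imports Defs
begin

lemma exhaust_7:
  fixes x :: 7
  shows "x = 0 \<or> x = 1 \<or> x = 2 \<or> x = 3 \<or> x = 4 \<or> x = 5 \<or> x = 6"
proof (induct x)
  case (of_int z)
  then have "z = 0 \<or> z = 1 \<or> z = 2 \<or> z = 3 \<or> z = 4 \<or> z = 5 \<or> z = 6" by fastforce
  then show ?case by auto
qed

lemma forall_7: "(\<forall>i::7. P i) \<longleftrightarrow> P 0 \<and> P 1 \<and> P 2 \<and> P 3 \<and> P 4 \<and> P 5 \<and> P 6"
  by (metis exhaust_7)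

lemma UNIV_7: "UNIV = {0,1,2,3,4,5,6::7}"
  using exhaust_7 by auto

lemma sum_7: "sum f (UNIV::7 set) = f 0 + f 1 + f 2 + f 3 + f 4 + f 5 + f 6"
  unfolding UNIV_7 by (simp add: ac_simps)

lemma inner7: "(x::real^7) \<bullet> y = x$0*y$0 + x$1*y$1 + x$2*y$2 + x$3*y$3 + x$4*y$4 + x$5*y$5 + x$6*y$6"
  by (simp add: inner_vec_def sum_7)

lemma seven7: "(7::7) = 0" by simp

lemma cross7_comp:
  "cross7 u v $ 0 = (u$2 * v$5 - u$5 * v$2) + (u$3 * v$4 - u$4 * v$3) - (u$1 * v$6 - u$6 * v$1)"
  "cross7 u v $ 1 = (u$0 * v$6 - u$6 * v$0) + (u$2 * v$3 - u$3 * v$2) + (u$4 * v$5 - u$5 * v$4)"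
  "cross7 u v $ 2 = (u$4 * v$6 - u$6 * v$4) - (u$0 * v$5 - u$5 * v$0) - (u$1 * v$3 - u$3 * v$1)"
  "cross7 u v $ 3 = (u$1 * v$2 - u$2 * v$1) - (u$0 * v$4 - u$4 * v$0) - (u$5 * v$6 - u$6 * v$5)"
  "cross7 u v $ 4 = (u$0 * v$3 - u$3 * v$0) - (u$1 * v$5 - u$5 * v$1) - (u$2 * v$6 - u$6 * v$2)"
  "cross7 u v $ 5 = (u$0 * v$2 - u$2 * v$0) + (u$1 * v$4 - u$4 * v$1) + (u$3 * v$6 - u$6 * v$3)"
  "cross7 u v $ 6 = (u$2 * v$4 - u$4 * v$2) - (u$0 * v$1 - u$1 * v$0) - (u$3 * v$5 - u$5 * v$3)"
  by (simp_all add: cross7_def phi_def wedge3_def idx_def axis_def seven7 algebra_simps)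

lemma cross_add_left: "cross7 (x + y) v = cross7 x v + cross7 y v"
  by (simp add: vec_eq_iff forall_7 cross7_comp algebra_simps)
lemma cross_add_right: "cross7 u (x + y) = cross7 u x + cross7 u y"
  by (simp add: vec_eq_iff forall_7 cross7_comp algebra_simps)
lemma cross_scale_left: "cross7 (c *\<^sub>R x) v = c *\<^sub>R cross7 x v"
  by (simp add: vec_eq_iff forall_7 cross7_comp algebra_simps)
lemma cross_scale_right: "cross7 u (c *\<^sub>R x) = c *\<^sub>R cross7 u x"
  by (simp add: vec_eq_iff forall_7 cross7_comp algebra_simps)
lemma cross_anti: "cross7 v u = - cross7 u v"
  by (simp add: vec_eq_iff forall_7 cross7_comp algebra_simps)
lemma cross_self: "cross7 u u = 0"
  by (simp add: vec_eq_iff forall_7 cross7_comp algebra_simps)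
lemma cross_zero_left: "cross7 0 u = 0"
  by (simp add: vec_eq_iff forall_7 cross7_comp)
lemma cross_zero_right: "cross7 u 0 = 0"
  by (simp add: vec_eq_iff forall_7 cross7_comp)
lemma cross_orth_left: "cross7 u v \<bullet> u = 0"
  by (simp add: inner7 cross7_comp algebra_simps)
lemma cross_orth_right: "cross7 u v \<bullet> v = 0"
  by (simp add: inner7 cross7_comp algebra_simps)
lemma cross_cross: "cross7 u (cross7 u v) = (u \<bullet> v) *\<^sub>R u - (u \<bullet> u) *\<^sub>R v"
  by (simp add: vec_eq_iff forall_7 cross7_comp inner7 algebra_simps)
lemma cross_norm: "cross7 u v \<bullet> cross7 u v = (u \<bullet> u) * (v \<bullet> v) - (u \<bullet> v)^2"
  unfolding inner7 cross7_comp power2_eq_square by algebra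

lemma kernel_subspace: "subspace {x. (X::real^7^7) *v x = 0}"
  unfolding subspace_def
  by (simp add: matrix_vector_right_distrib matrix_vector_mult_0_right matrix_vector_mult_scaleR)

lemma dim_kernel:
  fixes X :: "real^7^7"
  assumes sk: "skew X" and r: "rank X \<le> 4"
  shows "3 \<le> dim {x. X *v x = 0}"
proof -
  let ?R = "range ((*v) X)"
  let ?O = "{y \<in> UNIV. \<forall>x \<in> ?R. orthogonal x y}"
  have sR: "subspace ?R"
    by (simp add: real_vector.linear_subspace_image matrix_vector_mul_linear subspace_UNIV)
  have "dim ?O + dim ?R = dim (UNIV :: (real^7) set)"
    by (rule dim_subspace_orthogonal_to_vectors[OF sR subspace_UNIV]) simp
  moreover have "dim (UNIV :: (real^7) set) = 7" by simp
  moreover have "dim ?R = rank X" by (simp add: rank_dim_range)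
  ultimately have d: "3 \<le> dim ?O" using r by linarith
  have "?O \<subseteq> {x. X *v x = 0}"
  proof
    fix y assume y: "y \<in> ?O"
    have tr: "transpose X = - X" using sk by (simp add: skew_def)
    have "(X *v (transpose X *v y)) \<bullet> y = 0"
      using y by (auto simp: orthogonal_def)
    moreover have "(X *v z) \<bullet> y = (transpose X *v y) \<bullet> z" for z
      by (metis dot_lmul_matrix inner_commute transpose_matrix_vector)
    ultimately have "(transpose X *v y) = 0" by simp
    hence "(- X) *v y = 0" using tr by simp
    hence "- (X *v y) = 0" by (simp add: vec_eq_iff matrix_vector_mult_def sum_negf)
    thus "y \<in> {x. X *v x = 0}" by simp
  qed
  hence "dim ?O \<le> dim {x. X *v x = 0}" by (rule dim_subset)
  with d show ?thesis by linarith
qed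

lemma cross_span_closed:
  assumes gen: "\<forall>a\<in>S. \<forall>b\<in>S. cross7 a b \<in> span S"
    and a: "a \<in> span S" and b: "b \<in> span S"
  shows "cross7 a b \<in> span S"
proof -
  have 1: "cross7 a b \<in> span S" if "a \<in> S" "b \<in> span S" for a b
    apply (rule real_vector.span_induct_alt[where h="\<lambda>b. cross7 a b \<in> span S", OF that(2)])
    subgoal by (simp add: cross_zero_right span_zero)
    subgoal using gen that(1) by (simp add: cross_add_right cross_scale_right span_add span_scale)
    done
  show ?thesis
    apply (rule real_vector.span_induct_alt[where h="\<lambda>a. cross7 a b \<in> span S", OF a])
    subgoal by (simp add: cross_zero_left span_zero)
    subgoal using 1 b by (simp add: cross_add_left cross_scale_left span_add span_scale)
    done
qed

theorem proposition3p1: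
  fixes X :: "real^7^7"
  assumes "in_g2 X" and "rank X \<le> 4"
  shows "\<exists>V. associative3 V \<and> V \<subseteq> {x. X *v x = 0}"
proof -
  let ?K = "{x. X *v x = 0}"
  have sk: "skew X" and der: "\<And>v w. X *v cross7 v w = cross7 (X *v v) w + cross7 v (X *v w)"
    using assms(1) by (auto simp: in_g2_def)
  have dK: "3 \<le> dim ?K" using dim_kernel[OF sk assms(2)] .
  have subK: "subspace ?K" by (rule kernel_subspace)
  obtain B where B: "B \<subseteq> ?K" "independent B" "card B = dim ?K"
    using basis_exists[of ?K] by metis
  have fB: "finite B" using B(2) independent_bound by blast
  have cB: "card B \<ge> 3" using B(3) dK by simp
  hence "B \<noteq> {}" by auto
  then obtain u where uB: "u \<in> B" by blast
  have "card (B - {u}) \<ge> 1" using B(3) dK uB fB by simp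
  have "B - {u} \<noteq> {}"
  proof
    assume "B - {u} = {}"
    hence "card (B - {u}) = 0" by (simp only: card.empty)
    with \<open>card (B - {u}) \<ge> 1\<close> show False by simp
  qed
  then obtain v where vB: "v \<in> B" and uv: "v \<noteq> u" by blast
  have ind: "independent {u, v}"
    using B(2) uB vB by (meson empty_subsetI independent_mono insert_subset)
  have u0: "u \<noteq> 0" using ind by (auto simp: dependent_zero)
  have "independent {v, u}" using ind by (simp add: insert_commute)
  hence vspan: "v \<notin> span {u}"
    using uv by (simp add: independent_insert)
  have uK: "u \<in> ?K" and vK: "v \<in> ?K" using B(1) uB vB by auto
  define v' where "v' = v - ((u \<bullet> v) / (u \<bullet> u)) *\<^sub>R u"
  have uu: "u \<bullet> u > 0" using u0 by simp
  have v'0: "v' \<noteq> 0"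
  proof
    assume "v' = 0"
    hence "v = ((u \<bullet> v) / (u \<bullet> u)) *\<^sub>R u" by (simp add: v'_def)
    hence "v \<in> span {u}" by (metis span_base span_scale insertI1)
    with vspan show False by blast
  qed
  have uv': "u \<bullet> v' = 0" using uu by (simp add: v'_def inner_diff_right)
  have v'K: "v' \<in> ?K" unfolding v'_def
    using subK uK vK by (metis subspace_diff subspace_scale)
  define w where "w = cross7 u v'"
  have wK: "w \<in> ?K" using uK v'K by (simp add: w_def der cross_zero_left cross_zero_right)
  have ww: "w \<bullet> w = (u \<bullet> u) * (v' \<bullet> v')" by (simp add: w_def cross_norm uv')
  have v'v': "v' \<bullet> v' > 0" using v'0 by simp
  have w0: "w \<noteq> 0" using ww uu v'v' by auto
  have wu: "w \<bullet> u = 0" and wv: "w \<bullet> v' = 0" by (simp_all add: w_def cross_orth_left cross_orth_right)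
  let ?S = "{u, v', w}"
  have distinct: "u \<noteq> v'" "u \<noteq> w" "v' \<noteq> w"
    using uv' wu wv uu v'v' by (auto simp: inner_commute)
  have po: "pairwise orthogonal ?S"
    using uv' wu wv by (auto simp: pairwise_def orthogonal_def inner_commute)
  have indS: "independent ?S"
    by (rule pairwise_orthogonal_independent[OF po]) (use u0 v'0 w0 in auto)
  have cS: "card ?S = 3" using distinct by simp
  have dimV: "dim (span ?S) = 3" using dim_span_eq_card_independent[OF indS] cS by simp
  have VK: "span ?S \<subseteq> ?K" using span_minimal[OF _ subK] uK v'K wK by auto
  have c1: "cross7 u w = (u \<bullet> v') *\<^sub>R u - (u \<bullet> u) *\<^sub>R v'" by (simp add: w_def cross_cross)
  have c2: "cross7 v' w = - ((v' \<bullet> u) *\<^sub>R v' - (v' \<bullet> v') *\<^sub>R u)"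
  proof -
    have "cross7 v' w = cross7 v' (- cross7 v' u)" by (simp add: w_def cross_anti[of v' u])
    also have "\<dots> = - cross7 v' (cross7 v' u)"
      using cross_scale_right[of v' "-1" "cross7 v' u"] by simp
    finally show ?thesis by (simp add: cross_cross)
  qed
  have gen: "\<forall>a\<in>?S. \<forall>b\<in>?S. cross7 a b \<in> span ?S"
  proof (intro ballI)
    fix a b assume a: "a \<in> ?S" and b: "b \<in> ?S"
    have sp: "u \<in> span ?S" "v' \<in> span ?S" "w \<in> span ?S" by (simp_all add: span_base)
    have "cross7 u w \<in> span ?S" unfolding c1 using sp by (simp add: span_diff span_scale)
    moreover have "cross7 v' w \<in> span ?S" unfolding c2 using sp by (simp add: span_neg span_diff span_scale)
    moreover have "cross7 u v' \<in> span ?S" using sp by (simp add: w_def)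
    moreover have "cross7 x x \<in> span ?S" for x by (simp add: cross_self span_zero)
    moreover have "cross7 y x \<in> span ?S" if "cross7 x y \<in> span ?S" for x y
      using that by (metis cross_anti span_neg)
    ultimately show "cross7 a b \<in> span ?S" using a b by blast
  qed
  have "associative3 (span ?S)"
    unfolding associative3_def using dimV cross_span_closed[OF gen] by (simp add: subspace_span)
  with VK show ?thesis by blast
qed
end
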